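(* Let $n\ge3$, let $\boldsymbol\ell=(\ell_1,\ldots,\ell_n)$ be positive lengths, let $\mu\in\mathbb{R}$, and let $\tau$ and $N>0$ be smooth functions on $T^n$ depending only on $s^1$. Consider the conformal data set $(g_{\boldsymbol\ell},\mu\,\sigma^\flat_{\boldsymbol\ell},\tau,N)$. Let $$\tau^*=\frac{\int_{S^1}N\tau\,ds}{\int_{S^1}N\,ds},\qquad \xi=\tau-\tau^*.$$ (1) If $\mu$ and $\tau^*$ are nonzero and have the same sign, then there is a solution $(\phi,W)$ of the CTS-H equations with $\phi\equiv c=(\mu/\tau^* )^{1/q}$, where $W$ is parallel to $\partial_{s^1}$ and $\frac{1}{2N}\mathcal{L}_{g_{\boldsymbol\ell}}W=c^q\xi\,\sigma^\flat_{\boldsymbol\ell}$. The solution of the constraint equations generated by it is $$\bar g=g_{r\boldsymbol\ell},\qquad \bar K=\tau\,(r\ell_1)^2(ds^1)^2,\qquad r=c^{(q-2)/2}=(\mu/\tau^* )^{1/n}.$$ (2) If $\mu=0$ and $\tau^*=0$, then for every $c>0$ there is a solution $(\phi,W)$ of the CTS-H equations with $\phi\equiv c$ and $\frac{1}{2N}\mathcal{L}_{g_{\boldsymbol\ell}}W=c^q\xi\,\sigma^\flat_{\boldsymbol\ell}$, and the associated solution of the constraint equations is $\bar g=g_{r\boldsymbol\ell}$, $\bar K=\tau\,(r\ell_1)^2(ds^1)^2$ with $r=c^{(q-2)/2}$.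
   Context: Let $q=\frac{2n}{n-2}$, $\kappa=\frac{n-1}{n}$. $S^1=\mathbb{R}/\mathbb{Z}$ with unit coordinate $s$ ($\int_{S^1}ds=1$); $T^n=(S^1)^n$ with unit coordinates $(s^1,\ldots,s^n)$; functions of $s^1$ only are identified with functions on $S^1$. $g_{\boldsymbol\ell}=\sum_k\ell_k^2(ds^k)^2$, and $r\boldsymbol\ell=(r\ell_1,\ldots,r\ell_n)$. $\sigma^\flat_{\boldsymbol\ell}=\kappa\ell_1^2(ds^1)^2-\frac1n\sum_{k\ge2}\ell_k^2(ds^k)^2$ (transverse-traceless for $g_{\boldsymbol\ell}$). The conformal Killing operator is $\mathcal{L}_gW=L_Wg-\frac2n(\mathrm{div}_gW)g$. CTS-H method: given $(g,\sigma,\tau,N)$ ($\sigma$ transverse-traceless, $N>0$ a densitized lapse), the CTS-H equations for $\phi>0$ and a vector field $W$ are $$-2\kappa q\Delta_g\phi+R_g\phi-\Big|\sigma+\tfrac{1}{2N}\mathcal{L}_gW\Big|_g^2\phi^{-q-1}+\kappa\tau^2\phi^{q-1}=0,\qquad \mathrm{div}_g\Big(\tfrac{1}{2N}\mathcal{L}_gW\Big)=\kappa\phi^q d\tau,$$ and a solution generates the solution $\bar g=\phi^{q-2}g$, $\bar K=\phi^{-2}(\sigma+\frac{1}{2N}\mathcal{L}_gW)+\frac{\tau}{n}\bar g$ of the Einstein constraint equations $R_{\bar g}-|\bar K|^2+(\mathrm{tr}\bar K)^2=0$, $\mathrm{div}_{\bar g}\bar K=d\,\mathrm{tr}_{\bar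 g}\bar K$. *)

theory Defs
  imports "HOL-Analysis.Analysis"
begin

text \<open>The torus T^n = (S^1)^n with unit coordinates is modelled by
  real^'n (coordinates s^k = x $ k, k :: 'n, n = CARD('n)); functions on T^n are
  functions on real^'n that are 1-periodic in every coordinate. The distinguished
  coordinate s^1 is an arbitrary fixed index j0 :: 'n. Functions on S^1 are 1-periodic
  functions real => real. Symmetric 2-tensor fields are given by their components
  T x i j in the global coordinates s, vector fields W by components W x $ k
  (coefficients of d/ds^k).\<close>

definition qn :: "nat \<Rightarrow> real" where "qn n = 2 * real n / (real n - 2)"
definition kap :: "nat \<Rightarrow> real" where "kap n = (real n - 1) / real n"

definition pd :: "'n::finite \<Rightarrow> (real^'n \<Rightarrow> real) \<Rightarrow> real^'n \<Rightarrow> real" where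
  "pd k f x = deriv (\<lambda>h. f (x + h *\<^sub>R axis k 1)) 0"

definition smooth_S1 :: "(real \<Rightarrow> real) \<Rightarrow> bool" where
  "smooth_S1 f \<longleftrightarrow> (\<forall>k x. (deriv ^^ k) f differentiable (at x))"

definition periodic_S1 :: "(real \<Rightarrow> real) \<Rightarrow> bool" where
  "periodic_S1 f \<longleftrightarrow> (\<forall>x. f (x + 1) = f x)"

definition smooth_Tn :: "(real^'n::finite \<Rightarrow> real) \<Rightarrow> bool" where
  "smooth_Tn f \<longleftrightarrow> (\<forall>ks::'n list. continuous_on UNIV (foldr pd ks f) \<and>
      (\<forall>k x. (\<lambda>h. foldr pd ks f (x + h *\<^sub>R axis k 1)) differentiable (at 0)))"

definition periodic_Tn :: "(real^'n::finite \<Rightarrow> real) \<Rightarrow> bool" where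
  "periodic_Tn f \<longleftrightarrow> (\<forall>x k. f (x + axis k 1) = f x)"

type_synonym 'n tensor2 = "real^'n \<Rightarrow> 'n \<Rightarrow> 'n \<Rightarrow> real"
type_synonym 'n vfield = "real^'n \<Rightarrow> real^'n"

definition ginv :: "'n::finite tensor2 \<Rightarrow> real^'n \<Rightarrow> 'n \<Rightarrow> 'n \<Rightarrow> real" where
  "ginv g x i j = matrix_inv (\<chi> a b. g x a b) $ i $ j"

definition chr :: "'n::finite tensor2 \<Rightarrow> real^'n \<Rightarrow> 'n \<Rightarrow> 'n \<Rightarrow> 'n \<Rightarrow> real" where
  "chr g x k i j = 1/2 * (\<Sum>l\<in>UNIV. ginv g x k l *
      (pd i (\<lambda>y. g y j l) x + pd j (\<lambda>y. g y i l) x - pd l (\<lambda>y. g y i j) x))"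

definition ricci :: "'n::finite tensor2 \<Rightarrow> 'n tensor2" where
  "ricci g x i j = (\<Sum>k\<in>UNIV. pd k (\<lambda>y. chr g y k i j) x - pd j (\<lambda>y. chr g y k i k) x
      + (\<Sum>l\<in>UNIV. chr g x k k l * chr g x l i j - chr g x k j l * chr g x l i k))"

definition scal :: "'n::finite tensor2 \<Rightarrow> real^'n \<Rightarrow> real" where
  "scal g x = (\<Sum>i\<in>UNIV. \<Sum>j\<in>UNIV. ginv g x i j * ricci g x i j)"

definition lap :: "'n::finite tensor2 \<Rightarrow> (real^'n \<Rightarrow> real) \<Rightarrow> real^'n \<Rightarrow> real" where
  "lap g f x = (\<Sum>i\<in>UNIV. \<Sum>j\<in>UNIV. ginv g x i j *
      (pd i (pd j f) x - (\<Sum>k\<in>UNIV. chr g x k i j * pd k f x)))"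

definition covW :: "'n::finite tensor2 \<Rightarrow> 'n vfield \<Rightarrow> real^'n \<Rightarrow> 'n \<Rightarrow> 'n \<Rightarrow> real" where
  "covW g W x i k = pd i (\<lambda>y. W y $ k) x + (\<Sum>j\<in>UNIV. chr g x k i j * W x $ j)"

definition lieg :: "'n::finite tensor2 \<Rightarrow> 'n vfield \<Rightarrow> 'n tensor2" where
  "lieg g W x i j = (\<Sum>k\<in>UNIV. g x j k * covW g W x i k + g x i k * covW g W x j k)"

definition divV :: "'n::finite tensor2 \<Rightarrow> 'n vfield \<Rightarrow> real^'n \<Rightarrow> real" where
  "divV g W x = (\<Sum>i\<in>UNIV. covW g W x i i)"

definition ckill :: "'n::finite tensor2 \<Rightarrow> 'n vfield \<Rightarrow> 'n tensor2" where
  "ckill g W x i j = lieg g W x i j - 2 / real CARD('n) * divV g W x * g x i j"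

definition covT :: "'n::finite tensor2 \<Rightarrow> 'n tensor2 \<Rightarrow> real^'n \<Rightarrow> 'n \<Rightarrow> 'n \<Rightarrow> 'n \<Rightarrow> real" where
  "covT g A x i k j = pd i (\<lambda>y. A y k j) x - (\<Sum>l\<in>UNIV. chr g x l i k * A x l j)
      - (\<Sum>l\<in>UNIV. chr g x l i j * A x k l)"

definition divT :: "'n::finite tensor2 \<Rightarrow> 'n tensor2 \<Rightarrow> real^'n \<Rightarrow> 'n \<Rightarrow> real" where
  "divT g A x j = (\<Sum>i\<in>UNIV. \<Sum>k\<in>UNIV. ginv g x i k * covT g A x i k j)"

definition normsq :: "'n::finite tensor2 \<Rightarrow> 'n tensor2 \<Rightarrow> real^'n \<Rightarrow> real" where
  "normsq g A x = (\<Sum>i\<in>UNIV. \<Sum>j\<in>UNIV. \<Sum>k\<in>UNIV. \<Sum>l\<in>UNIV.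
      ginv g x i k * ginv g x j l * A x i j * A x k l)"

definition trg :: "'n::finite tensor2 \<Rightarrow> 'n tensor2 \<Rightarrow> real^'n \<Rightarrow> real" where
  "trg g A x = (\<Sum>i\<in>UNIV. \<Sum>j\<in>UNIV. ginv g x i j * A x i j)"

definition gl :: "('n::finite \<Rightarrow> real) \<Rightarrow> 'n tensor2" where
  "gl ell x i j = (if i = j then (ell i)\<^sup>2 else 0)"

definition sigflat :: "('n::finite \<Rightarrow> real) \<Rightarrow> 'n \<Rightarrow> 'n tensor2" where
  "sigflat ell j0 x i j = (if i \<noteq> j then 0
      else if i = j0 then kap CARD('n) * (ell i)\<^sup>2 else - (1 / real CARD('n)) * (ell i)\<^sup>2)"

definition ctsh_eqs :: "'n::finite tensor2 \<Rightarrow> 'n tensor2 \<Rightarrow> (real^'n \<Rightarrow> real) \<Rightarrow> (real^'n \<Rightarrow> real)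
    \<Rightarrow> (real^'n \<Rightarrow> real) \<Rightarrow> 'n vfield \<Rightarrow> bool" where
  "ctsh_eqs g \<sigma> \<tau> N \<phi> W \<longleftrightarrow>
     (\<forall>x. - 2 * kap CARD('n) * qn CARD('n) * lap g \<phi> x + scal g x * \<phi> x
         - normsq g (\<lambda>y i j. \<sigma> y i j + 1 / (2 * N y) * ckill g W y i j) x
             * \<phi> x powr (- qn CARD('n) - 1)
         + kap CARD('n) * (\<tau> x)\<^sup>2 * \<phi> x powr (qn CARD('n) - 1) = 0) \<and>
     (\<forall>x j. divT g (\<lambda>y i k. 1 / (2 * N y) * ckill g W y i k) x j
         = kap CARD('n) * \<phi> x powr qn CARD('n) * pd j \<tau> x)"

definition ctsh_solution :: "'n::finite tensor2 \<Rightarrow> 'n tensor2 \<Rightarrow> (real^'n \<Rightarrow> real) \<Rightarrow> (real^'n \<Rightarrow> real)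
    \<Rightarrow> (real^'n \<Rightarrow> real) \<Rightarrow> 'n vfield \<Rightarrow> bool" where
  "ctsh_solution g \<sigma> \<tau> N \<phi> W \<longleftrightarrow>
     (\<forall>x. \<phi> x > 0) \<and> smooth_Tn \<phi> \<and> periodic_Tn \<phi> \<and>
     (\<forall>k. smooth_Tn (\<lambda>x. W x $ k) \<and> periodic_Tn (\<lambda>x. W x $ k)) \<and>
     ctsh_eqs g \<sigma> \<tau> N \<phi> W"

definition gen_g :: "'n::finite tensor2 \<Rightarrow> (real^'n \<Rightarrow> real) \<Rightarrow> 'n tensor2" where
  "gen_g g \<phi> x i j = \<phi> x powr (qn CARD('n) - 2) * g x i j"

definition gen_K :: "'n::finite tensor2 \<Rightarrow> 'n tensor2 \<Rightarrow> (real^'n \<Rightarrow> real) \<Rightarrow> (real^'n \<Rightarrow> real)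
    \<Rightarrow> (real^'n \<Rightarrow> real) \<Rightarrow> 'n vfield \<Rightarrow> 'n tensor2" where
  "gen_K g \<sigma> \<tau> N \<phi> W x i j = \<phi> x powr (-2) * (\<sigma> x i j + 1 / (2 * N x) * ckill g W x i j)
      + \<tau> x / real CARD('n) * gen_g g \<phi> x i j"

definition constraints :: "'n::finite tensor2 \<Rightarrow> 'n tensor2 \<Rightarrow> bool" where
  "constraints gb K \<longleftrightarrow> (\<forall>x. scal gb x - normsq gb K x + (trg gb K x)\<^sup>2 = 0 \<and>
      (\<forall>j. divT gb K x j = pd j (trg gb K) x))"

end

theory Submission
  imports Defs
begin


lemma S1_iff: "smooth_S1 f \<longleftrightarrow> (\<forall>x. f differentiable (at x)) \<and> smooth_S1 (deriv f)"
  unfolding smooth_S1_def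
proof safe
  fix k x assume "\<forall>k x. (deriv ^^ k) f differentiable at x"
  then show "(deriv ^^ k) (deriv f) differentiable at x"
    by (metis comp_apply funpow_Suc_right)
next
  fix x assume "\<forall>k x. (deriv ^^ k) f differentiable at x"
  then show "f differentiable at x" by (metis funpow_0)
next
  fix k x assume a: "\<forall>x. f differentiable at x" "\<forall>k x. (deriv ^^ k) (deriv f) differentiable at x"
  show "(deriv ^^ k) f differentiable at x"
  proof (cases k)
    case 0 then show ?thesis using a by simp
  next
    case (Suc m) then show ?thesis using a(2) by (metis comp_apply funpow_Suc_right)
  qed
qed

inductive Alg :: "(real \<Rightarrow> real) \<Rightarrow> bool" where
  base: "smooth_S1 f \<Longrightarrow> Alg f"
| const: "Alg (\<lambda>x. c)"
| add: "Alg f \<Longrightarrow> Alg g \<Longrightarrow> Alg (\<lambda>x. f x + g x)"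
| mult: "Alg f \<Longrightarrow> Alg g \<Longrightarrow> Alg (\<lambda>x. f x * g x)"

lemma Alg_step: "Alg h \<Longrightarrow> (\<forall>x. h differentiable (at x)) \<and> Alg (deriv h)"
proof (induction rule: Alg.induct)
  case (base f) then show ?case using S1_iff Alg.base by blast
next
  case (const c) then show ?case by (simp add: Alg.const)
next
  case (add f g)
  have "deriv (\<lambda>x. f x + g x) = (\<lambda>x. deriv f x + deriv g x)"
  proof
    fix x show "deriv (\<lambda>x. f x + g x) x = deriv f x + deriv g x"
      using add.IH by (intro DERIV_imp_deriv derivative_intros) (auto simp: DERIV_deriv_iff_real_differentiable)
  qed
  then show ?case using add.IH by (auto intro!: Alg.add)
next
  case (mult f g)
  have "deriv (\<lambda>x. f x * g x) = (\<lambda>x. deriv f x * g x + f x * deriv g x)"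
  proof
    fix x
    have "(f has_real_derivative deriv f x) (at x)" "(g has_real_derivative deriv g x) (at x)"
      using mult.IH by (auto simp: DERIV_deriv_iff_real_differentiable)
    from DERIV_mult[OF this] show "deriv (\<lambda>x. f x * g x) x = deriv f x * g x + f x * deriv g x"
      by (metis DERIV_imp_deriv mult.commute)
  qed
  then show ?case using mult by (auto intro!: Alg.add Alg.mult)
qed

lemma Alg_smooth: "Alg h \<Longrightarrow> smooth_S1 h"
proof -
  have "\<And>k h. Alg h \<Longrightarrow> Alg ((deriv ^^ k) h)"
  proof -
    fix k show "\<And>h. Alg h \<Longrightarrow> Alg ((deriv ^^ k) h)"
    proof (induction k)
      case 0 then show ?case by simp
    next
      case (Suc k) then show ?case using Alg_step by (metis comp_apply funpow_Suc_right)
    qed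
  qed
  then show "Alg h \<Longrightarrow> smooth_S1 h" unfolding smooth_S1_def using Alg_step by blast
qed

lemma antideriv:
  fixes f :: "real \<Rightarrow> real"
  assumes "continuous_on UNIV f"
  shows "\<exists>G. \<forall>x. (G has_real_derivative f x) (at x)"
proof -
  define G where "G u = integral {0..u} f - integral {u..0} f" for u
  have int: "f integrable_on {a..b}" for a b
    using assms by (intro integrable_continuous_interval) (auto intro: continuous_on_subset)
  have "(G has_real_derivative f x) (at x)" for x
  proof -
    define a where "a = min 0 x - 1"
    define b where "b = max 0 x + 1"
    have eq: "G u = integral {a..u} f - integral {a..0} f" if "u > a" for u
    proof (cases "u \<ge> 0")
      case True
      have "integral {u..0} f = 0"
        using True by (cases "u = 0") auto
      moreover have "integral {a..0} f + integral {0..u} f = integral {a..u} f"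
        using True a_def by (intro Henstock_Kurzweil_Integration.integral_combine[OF _ _ int]) auto
      ultimately show ?thesis unfolding G_def by simp
    next
      case False
      have "integral {0..u} f = 0" using False by simp
      moreover have "integral {a..u} f + integral {u..0} f = integral {a..0} f"
        using False that by (intro Henstock_Kurzweil_Integration.integral_combine[OF _ _ int]) auto
      ultimately show ?thesis unfolding G_def by simp
    qed
    have "((\<lambda>u. integral {a..u} f) has_real_derivative f x) (at x within {a..b})"
      using assms a_def b_def
      by (intro integral_has_real_derivative) (auto intro: continuous_on_subset)
    then have "((\<lambda>u. integral {a..u} f) has_real_derivative f x) (at x)"
      using a_def b_def by (subst (asm) at_within_interior) auto
    then have "((\<lambda>u. integral {a..u} f - integral {a..0} f) has_real_derivative f x) (at x)"
      by (auto intro!: derivative_eq_intros)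
    then show ?thesis
      by (rule has_field_derivative_transform_within_open[where S="{a<..}"]) (use eq a_def in auto)
  qed
  then show ?thesis by blast
qed



lemma axis_nth_j: "(x + h *\<^sub>R axis k 1) $ j0 = x $ j0 + (if k = j0 then h else 0)"
  by (simp add: axis_def)

lemma pd_const[simp]: "pd k (\<lambda>y. c) x = 0"
  unfolding pd_def by simp

lemma pd_comp:
  assumes "k = j0 \<Longrightarrow> H differentiable (at (x $ j0))"
  shows "pd k (\<lambda>y. H (y $ j0)) x = (if k = j0 then deriv H (x $ j0) else 0)"
proof (cases "k = j0")
  case True
  have d: "(H has_real_derivative deriv H (x $ j0)) (at (0 + x $ j0))"
    using assms True by (simp add: DERIV_deriv_iff_real_differentiable)
  have "((\<lambda>h. H (h + x $ j0)) has_real_derivative deriv H (x $ j0)) (at 0)"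
    using d DERIV_shift[of H "deriv H (x $ j0)" 0 "x $ j0"] by simp
  then have "((\<lambda>h. H (x $ j0 + h)) has_real_derivative deriv H (x $ j0)) (at 0)"
    by (simp add: add.commute)
  then show ?thesis unfolding pd_def axis_nth_j using True by (simp add: DERIV_imp_deriv)
next
  case False then show ?thesis unfolding pd_def axis_nth_j by simp
qed

lemma foldr_pd_comp:
  assumes "smooth_S1 H"
  shows "foldr pd ks (\<lambda>y. H (y $ j0)) = (if (\<forall>k\<in>set ks. k = j0) then (\<lambda>x. (deriv ^^ length ks) H (x $ j0)) else (\<lambda>x. 0))"
proof (induction ks)
  case Nil then show ?case by simp
next
  case (Cons k ks)
  show ?case
  proof (cases "\<forall>k\<in>set ks. k = j0")
    case True
    have "pd k (\<lambda>y. (deriv ^^ length ks) H (y $ j0)) x = (if k = j0 then (deriv ^^ Suc (length ks)) H (x $ j0) else 0)" for x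
      using assms unfolding smooth_S1_def by (subst pd_comp) auto
    then show ?thesis using Cons True by (auto intro!: ext)
  next
    case False then show ?thesis using Cons by (auto intro!: ext simp del: pd_const simp add: pd_def)
  qed
qed

lemma smooth_Tn_comp:
  assumes "smooth_S1 H"
  shows "smooth_Tn (\<lambda>y. H (y $ j0))"
  unfolding smooth_Tn_def
proof (intro allI conjI)
  fix ks :: "'a list"
  let ?D = "(deriv ^^ length ks) H"
  have dif: "?D differentiable (at s)" for s using assms unfolding smooth_S1_def by blast
  then have cD: "continuous_on UNIV ?D"
    by (meson continuous_at_imp_continuous_on differentiable_imp_continuous_within)
  have cc: "continuous_on UNIV (\<lambda>x::real^'a. ?D (x $ j0))"
    by (rule continuous_on_compose2[OF cD]) (auto intro: continuous_intros)
  show "continuous_on UNIV (foldr pd ks (\<lambda>y. H (y $ j0)))"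
    unfolding foldr_pd_comp[OF assms] using cc by (cases "\<forall>k\<in>set ks. k = j0") auto
  fix k x
  have i: "(\<lambda>h. x $ j0 + (if k = j0 then h else 0)) differentiable (at (0::real))"
    by (cases "k = j0") (auto intro!: derivative_intros)
  have "(?D \<circ> (\<lambda>h. x $ j0 + (if k = j0 then h else 0))) differentiable (at 0)"
    by (rule differentiable_chain_at[OF i dif])
  then have "(\<lambda>h. ?D ((x + h *\<^sub>R axis k 1) $ j0)) differentiable (at 0)"
    unfolding axis_nth_j by (simp add: o_def)
  then show "(\<lambda>h. foldr pd ks (\<lambda>y. H (y $ j0)) (x + h *\<^sub>R axis k 1)) differentiable (at 0)"
    unfolding foldr_pd_comp[OF assms] by (cases "\<forall>k\<in>set ks. k = j0") auto
qed

lemma periodic_Tn_comp: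
  assumes "periodic_S1 H"
  shows "periodic_Tn (\<lambda>y::real^'n::finite. H (y $ j0))"
  unfolding periodic_Tn_def
proof (intro allI)
  fix x :: "real^'n" and k
  have "(x + axis k 1) $ j0 = x $ j0 + (if k = j0 then 1 else 0)" by (simp add: axis_def)
  then show "H ((x + axis k 1) $ j0) = H (x $ j0)" using assms unfolding periodic_S1_def by auto
qed

lemma matrix_inv_eq:
  fixes A B :: "real^'n^'n"
  assumes "A ** B = mat 1" "B ** A = mat 1"
  shows "matrix_inv A = B"
proof -
  have ex: "\<exists>A'. A ** A' = mat 1 \<and> A' ** A = mat 1" using assms by blast
  define A' where "A' = matrix_inv A"
  have A': "A ** A' = mat 1" "A' ** A = mat 1"
    using someI_ex[OF ex] unfolding A'_def matrix_inv_def by auto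
  have "A' = A' ** (A ** B)" using assms by (simp add: matrix_mul_rid)
  also have "\<dots> = (A' ** A) ** B" by (simp add: matrix_mul_assoc)
  also have "\<dots> = B" using A' by (simp add: matrix_mul_lid)
  finally show ?thesis unfolding A'_def .
qed

lemma mult_delta: "(if i = k then a else (0::real)) * (if k = j then b else 0) = (if k = i then (if i = j then a * b else 0) else 0)"
  by auto

lemma ginv_gl:
  assumes "\<forall>k. e k \<noteq> 0"
  shows "ginv (gl e) x i j = (if i = j then 1 / (e i)\<^sup>2 else 0)"
proof -
  let ?A = "(\<chi> a b. gl e x a b) :: real^'a^'a"
  let ?B = "(\<chi> a b. if a = b then 1 / (e a)\<^sup>2 else 0) :: real^'a^'a"
  have "?A ** ?B = mat 1" "?B ** ?A = mat 1"
    using assms by (auto simp: matrix_matrix_mult_def mat_def gl_def vec_eq_iff mult_delta)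
  then show ?thesis unfolding ginv_def by (subst matrix_inv_eq) auto
qed



lemma pd_const_fun[simp]: "pd k (\<lambda>y. c) = (\<lambda>x. 0)"
  by (rule ext) simp

lemma chr_gl[simp]: "chr (gl e) x k i j = 0"
  unfolding chr_def gl_def by simp

lemma scal_gl[simp]: "scal (gl e) x = 0"
  unfolding scal_def ricci_def by simp

lemma lap_gl_const[simp]: "lap (gl e) (\<lambda>x. c) x = 0"
  unfolding lap_def by simp

definition Wv :: "'n::finite \<Rightarrow> (real \<Rightarrow> real) \<Rightarrow> real^'n \<Rightarrow> real^'n" where
  "Wv j0 w x = (\<chi> k. if k = j0 then w (x $ j0) else 0)"

lemma Wv_comp: "(\<lambda>y. Wv j0 w y $ k) = (\<lambda>y. (if k = j0 then w else (\<lambda>_. 0)) (y $ j0))"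
  unfolding Wv_def by auto

lemma covW_Wv:
  assumes "\<forall>s. w differentiable (at s)"
  shows "covW (gl e) (Wv j0 w) x i k = (if i = j0 \<and> k = j0 then deriv w (x $ j0) else 0)"
  unfolding covW_def Wv_comp using assms by (subst pd_comp) auto

lemma ckill_Wv:
  assumes "\<forall>s. w differentiable (at s)"
  shows "ckill (gl e) (Wv j0 w) x i j = 2 * deriv w (x $ j0) * sigflat e j0 x i j"
proof -
  have n: "real CARD('a) > 0" by simp
  have l: "lieg (gl e) (Wv j0 w) x i j = (if i = j0 \<and> j = j0 then 2 * (e j0)\<^sup>2 * deriv w (x $ j0) else 0)"
  proof -
    have "\<And>k. gl e x j k * covW (gl e) (Wv j0 w) x i k + gl e x i k * covW (gl e) (Wv j0 w) x j k
      = (if k = j0 then (if i = j0 \<and> j = j0 then 2 * (e j0)\<^sup>2 * deriv w (x $ j0) else 0) else 0)"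
      unfolding covW_Wv[OF assms] gl_def by auto
    then show ?thesis unfolding lieg_def by simp
  qed
  have d: "divV (gl e) (Wv j0 w) x = deriv w (x $ j0)"
    unfolding divV_def covW_Wv[OF assms] by simp
  show ?thesis
    unfolding ckill_def l d sigflat_def gl_def kap_def using n
    by (auto simp: field_simps)
qed



lemma normsq_gl:
  assumes "\<forall>k. e k \<noteq> 0"
  shows "normsq (gl e) A x = (\<Sum>i\<in>UNIV. \<Sum>j\<in>UNIV. (A x i j)\<^sup>2 / ((e i)\<^sup>2 * (e j)\<^sup>2))"
proof -
  have "\<And>i j k l. ginv (gl e) x i k * ginv (gl e) x j l * A x i j * A x k l =
     (if l = j then (if k = i then (A x i j)\<^sup>2 / ((e i)\<^sup>2 * (e j)\<^sup>2) else 0) else 0)"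
    unfolding ginv_gl[OF assms] by (auto simp: power2_eq_square)
  then show ?thesis unfolding normsq_def by simp
qed

lemma trg_gl:
  assumes "\<forall>k. e k \<noteq> 0"
  shows "trg (gl e) A x = (\<Sum>i\<in>UNIV. A x i i / (e i)\<^sup>2)"
proof -
  have "\<And>i j. ginv (gl e) x i j * A x i j = (if j = i then A x i i / (e i)\<^sup>2 else 0)"
    unfolding ginv_gl[OF assms] by auto
  then show ?thesis unfolding trg_def by simp
qed

lemma divT_gl:
  assumes "\<forall>k. e k \<noteq> 0"
  shows "divT (gl e) A x j = (\<Sum>i\<in>UNIV. pd i (\<lambda>y. A y i j) x / (e i)\<^sup>2)"
proof -
  have "\<And>i k. ginv (gl e) x i k * covT (gl e) A x i k j = (if k = i then pd i (\<lambda>y. A y i j) x / (e i)\<^sup>2 else 0)"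
    unfolding ginv_gl[OF assms] covT_def by auto
  then show ?thesis unfolding divT_def by simp
qed

lemma sum_if_j0: "(\<Sum>i\<in>(UNIV::'n::finite set). if i = j0 then a else b) = a + (real CARD('n) - 1) * b"
proof -
  have "(\<Sum>i\<in>(UNIV::'n set). if i = j0 then a else b) = (\<Sum>i\<in>(UNIV::'n set). b + (if i = j0 then a - b else 0))"
    by (rule sum.cong) auto
  also have "\<dots> = real CARD('n) * b + (a - b)" by (simp add: sum.distrib)
  finally show ?thesis by (simp add: algebra_simps)
qed

lemma sum_if_j0': "(\<Sum>i\<in>(UNIV::'n::finite set). if i = j0 then a else 0) = a"
  by simp

lemma normsq_sigflat:
  fixes e :: "'n::finite \<Rightarrow> real"
  assumes "\<forall>k. e k \<noteq> 0"
  shows "normsq (gl e) (\<lambda>y i j. a y * sigflat e j0 y i j) x = (a x)\<^sup>2 * kap CARD('n::finite)"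
proof -
  let ?n = "real CARD('n)"
  have n: "?n > 0" by simp
  have "\<And>i j. (a x * sigflat e j0 x i j)\<^sup>2 / ((e i)\<^sup>2 * (e j)\<^sup>2) =
     (if j = i then (if i = j0 then (a x)\<^sup>2 * (kap CARD('n))\<^sup>2 else (a x)\<^sup>2 / ?n\<^sup>2) else 0)"
    using assms by (auto simp: sigflat_def field_simps power2_eq_square)
  then have "normsq (gl e) (\<lambda>y i j. a y * sigflat e j0 y i j) x =
     (\<Sum>i\<in>(UNIV::'n set). if i = j0 then (a x)\<^sup>2 * (kap CARD('n))\<^sup>2 else (a x)\<^sup>2 / ?n\<^sup>2)"
    unfolding normsq_gl[OF assms] by simp
  also have "\<dots> = (a x)\<^sup>2 * (kap CARD('n))\<^sup>2 + (?n - 1) * ((a x)\<^sup>2 / ?n\<^sup>2)"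
    by (rule sum_if_j0)
  also have "\<dots> = (a x)\<^sup>2 * kap CARD('n)"
    using n unfolding kap_def by (simp add: field_simps power2_eq_square)
  finally show ?thesis .
qed



lemma Alg_diff: "Alg f \<Longrightarrow> Alg g \<Longrightarrow> Alg (\<lambda>x. f x - g x)"
proof -
  assume "Alg f" "Alg g"
  then have "Alg (\<lambda>x. f x + (\<lambda>x. -1) x * g x)" by (intro Alg.add Alg.mult Alg.const)
  then show ?thesis by simp
qed

lemma smooth_cont: "smooth_S1 f \<Longrightarrow> continuous_on UNIV f"
  unfolding smooth_S1_def
  by (metis continuous_at_imp_continuous_on differentiable_imp_continuous_within funpow_0)

lemma smooth_diff: "smooth_S1 f \<Longrightarrow> f differentiable (at x)"
  unfolding smooth_S1_def by (metis funpow_0)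

lemma exists_w:
  fixes t Nf :: "real \<Rightarrow> real"
  assumes "smooth_S1 t" "periodic_S1 t" "smooth_S1 Nf" "periodic_S1 Nf" "\<forall>s. Nf s > 0"
    and ts: "\<tau>s = integral {0..1} (\<lambda>s. Nf s * t s) / integral {0..1} Nf"
  shows "\<exists>w. (\<forall>s. (w has_real_derivative (m * (Nf s * (t s - \<tau>s)))) (at s)) \<and> periodic_S1 w \<and> smooth_S1 w"
proof -
  define f where "f s = m * (Nf s * (t s - \<tau>s))" for s
  have Af: "Alg f" unfolding f_def using assms
    by (intro Alg.mult Alg_diff Alg.const Alg.base)
  then have sf: "smooth_S1 f" by (rule Alg_smooth)
  then have cf: "continuous_on UNIV f" by (rule smooth_cont)
  obtain G where G: "\<And>x. (G has_real_derivative f x) (at x)" using antideriv[OF cf] by blast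
  have dG: "deriv G = f" using G by (auto intro!: ext DERIV_imp_deriv)
  have sG: "smooth_S1 G"
    by (subst S1_iff) (use G dG sf in \<open>auto simp: real_differentiable_def\<close>)
  have fper: "f (s + 1) = f s" for s
    using assms unfolding f_def periodic_S1_def by simp
  have const: "G (s + 1) - G s = G 1 - G 0" for s
  proof -
    have "\<forall>x. ((\<lambda>s. G (s + 1) - G s) has_real_derivative 0) (at x)"
    proof
      fix x
      have "((\<lambda>s. G (s + 1)) has_real_derivative f (x + 1)) (at x)"
        using G[of "x+1"] DERIV_shift by blast
      then have "((\<lambda>s. G (s + 1) - G s) has_real_derivative f (x + 1) - f x) (at x)"
        by (intro derivative_intros G)
      then show "((\<lambda>s. G (s + 1) - G s) has_real_derivative 0) (at x)" by (simp add: fper)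
    qed
    from DERIV_isconst_all[OF this, of s 0] show ?thesis by simp
  qed
  have "(f has_integral (G 1 - G 0)) {0..1}"
    by (rule fundamental_theorem_of_calculus) (auto intro: has_field_derivative_at_within G simp: has_real_derivative_iff_has_vector_derivative[symmetric])
  then have I: "integral {0..1} f = G 1 - G 0" by (rule integral_unique)
  have cN: "continuous_on UNIV Nf" "continuous_on UNIV t" using assms by (auto intro: smooth_cont)
  have iN: "Nf integrable_on {0..1}" "(\<lambda>s. Nf s * t s) integrable_on {0..1}"
    using cN by (auto intro!: integrable_continuous_interval continuous_intros intro: continuous_on_subset)
  obtain x0 where x0: "x0 \<in> {0..1::real}" "\<forall>y\<in>{0..1}. Nf x0 \<le> Nf y"
  proof -
    have "continuous_on {0..1} Nf" using cN(1) by (rule continuous_on_subset) auto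
    then have "\<exists>x\<in>{0..1::real}. \<forall>y\<in>{0..1}. Nf x \<le> Nf y"
      by (intro continuous_attains_inf) auto
    then show ?thesis using that by blast
  qed
  have "integral {0..1} (\<lambda>_::real. Nf x0) \<le> integral {0..1} Nf"
    by (rule Henstock_Kurzweil_Integration.integral_le) (use iN x0 in auto)
  then have Npos: "integral {0..1} Nf > 0" using assms(5)[rule_format, of x0] by simp
  have "integral {0..1} f = m * (integral {0..1} (\<lambda>s. Nf s * t s) - \<tau>s * integral {0..1} Nf)"
  proof -
    have "((\<lambda>s. m * (Nf s * t s) - (m * \<tau>s) * Nf s) has_integral
        (m * integral {0..1} (\<lambda>s. Nf s * t s) - (m * \<tau>s) * integral {0..1} Nf)) {0..1}"
      using iN by (intro has_integral_diff has_integral_mult_right integrable_integral)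
    moreover have "(\<lambda>s. m * (Nf s * t s) - (m * \<tau>s) * Nf s) = f"
      unfolding f_def by (auto simp: algebra_simps)
    ultimately show ?thesis by (simp add: integral_unique algebra_simps)
  qed
  also have "\<dots> = 0" using Npos unfolding ts by simp
  finally have "G 1 - G 0 = 0" using I by simp
  then have "periodic_S1 G" using const unfolding periodic_S1_def by (metis eq_iff_diff_eq_0)
  then show ?thesis using G sG unfolding f_def by blast
qed



lemma pd_tC:
  assumes "smooth_S1 t"
  shows "pd i (\<lambda>y. a * (t (y $ j0) - b) * C) x = (if i = j0 then a * deriv t (x $ j0) * C else 0)"
proof -
  have d: "(t has_real_derivative deriv t s) (at s)" for s
    using smooth_diff[OF assms] by (simp add: DERIV_deriv_iff_real_differentiable)
  have "((\<lambda>s. a * (t s - b) * C) has_real_derivative a * deriv t s * C) (at s)" for s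
    by (auto intro!: derivative_eq_intros d)
  then have "deriv (\<lambda>s. a * (t s - b) * C) s = a * deriv t s * C"
    "(\<lambda>s. a * (t s - b) * C) differentiable (at s)" for s
    by (auto simp: DERIV_imp_deriv real_differentiable_def)
  then show ?thesis
    using pd_comp[of i j0 "\<lambda>s. a * (t s - b) * C" x] by simp
qed

lemma r2:
  fixes c q r :: real
  assumes "c > 0" "r = c powr ((q - 2) / 2)"
  shows "r\<^sup>2 = c powr (q - 2)"
proof -
  have "r\<^sup>2 = c powr ((q - 2) / 2) * c powr ((q - 2) / 2)" using assms by (simp add: power2_eq_square)
  also have "\<dots> = c powr ((q - 2) / 2 + (q - 2) / 2)" by (rule powr_add[symmetric])
  finally show ?thesis by simp
qed

lemma constraints_K:
  fixes e :: "'n::finite \<Rightarrow> real"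
  assumes e: "\<forall>k. e k \<noteq> 0" and t: "smooth_S1 t"
  shows "constraints (gl e) (\<lambda>x i j. if i = j0 \<and> j = j0 then t (x $ j0) * (e j0)\<^sup>2 else 0)"
  (is "constraints _ ?K")
proof -
  have tr: "trg (gl e) ?K = (\<lambda>x. t (x $ j0))"
  proof
    fix x
    have "\<And>i. ?K x i i / (e i)\<^sup>2 = (if i = j0 then t (x $ j0) else 0)"
      using e by auto
    then show "trg (gl e) ?K x = t (x $ j0)" unfolding trg_gl[OF e] by simp
  qed
  have ns: "normsq (gl e) ?K x = (t (x $ j0))\<^sup>2" for x
  proof -
    have "\<And>i j. (?K x i j)\<^sup>2 / ((e i)\<^sup>2 * (e j)\<^sup>2) = (if j = j0 then (if i = j0 then (t (x $ j0))\<^sup>2 else 0) else 0)"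
      using e by (auto simp: power2_eq_square)
    then show ?thesis unfolding normsq_gl[OF e] by simp
  qed
  have dv: "divT (gl e) ?K x j = pd j (trg (gl e) ?K) x" for x j
  proof -
    have "\<And>i. pd i (\<lambda>y. ?K y i j) x / (e i)\<^sup>2 = (if i = j0 then (if j = j0 then deriv t (x $ j0) else 0) else 0)"
    proof -
      fix i
      show "pd i (\<lambda>y. ?K y i j) x / (e i)\<^sup>2 = (if i = j0 then (if j = j0 then deriv t (x $ j0) else 0) else 0)"
      proof (cases "i = j0 \<and> j = j0")
        case True
        then have "pd i (\<lambda>y. ?K y i j) x = pd i (\<lambda>y. 1 * (t (y $ j0) - 0) * (e j0)\<^sup>2) x" by simp
        then show ?thesis unfolding pd_tC[OF t] using True e by simp
      next
        case False then show ?thesis by auto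
      qed
    qed
    then have "divT (gl e) ?K x j = (if j = j0 then deriv t (x $ j0) else 0)"
      unfolding divT_gl[OF e] by simp
    moreover have "pd j (\<lambda>y. t (y $ j0)) x = (if j = j0 then deriv t (x $ j0) else 0)"
      using smooth_diff[OF t] by (subst pd_comp) auto
    ultimately show ?thesis unfolding tr by simp
  qed
  show ?thesis unfolding constraints_def using tr ns dv by simp
qed



lemma core:
  fixes ell :: "'n::finite \<Rightarrow> real" and j0 :: 'n and \<mu> c r \<tau>s :: real and t Nf :: "real \<Rightarrow> real"
  assumes n3: "CARD('n) \<ge> 3" and ell: "\<forall>k. ell k > 0"
    and st: "smooth_S1 t" and pt: "periodic_S1 t" and sN: "smooth_S1 Nf" and pN: "periodic_S1 Nf"
    and Npos: "\<forall>s. Nf s > 0"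
    and ts: "\<tau>s = integral {0..1} (\<lambda>s. Nf s * t s) / integral {0..1} Nf"
    and c: "c > 0" and mu: "\<mu> = c powr qn CARD('n) * \<tau>s"
    and r: "r = c powr ((qn CARD('n) - 2) / 2)"
  shows "\<exists>W. ctsh_solution (gl ell) (\<lambda>x i j. \<mu> * sigflat ell j0 x i j) (\<lambda>x. t (x $ j0)) (\<lambda>x. Nf (x $ j0)) (\<lambda>x. c) W
           \<and> (\<forall>x k. k \<noteq> j0 \<longrightarrow> W x $ k = 0)
           \<and> (\<forall>x i j. 1 / (2 * Nf (x $ j0)) * ckill (gl ell) W x i j = c powr qn CARD('n) * (t (x $ j0) - \<tau>s) * sigflat ell j0 x i j)
           \<and> gen_g (gl ell) (\<lambda>x. c) = gl (\<lambda>k. r * ell k)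
           \<and> gen_K (gl ell) (\<lambda>x i j. \<mu> * sigflat ell j0 x i j) (\<lambda>x. t (x $ j0)) (\<lambda>x. Nf (x $ j0)) (\<lambda>x. c) W
               = (\<lambda>x i j. if i = j0 \<and> j = j0 then t (x $ j0) * (r * ell j0)\<^sup>2 else 0)
           \<and> constraints (gen_g (gl ell) (\<lambda>x. c)) (gen_K (gl ell) (\<lambda>x i j. \<mu> * sigflat ell j0 x i j) (\<lambda>x. t (x $ j0)) (\<lambda>x. Nf (x $ j0)) (\<lambda>x. c) W)"
proof -
  define q where "q = qn CARD('n)"
  define m where "m = c powr q"
  define n where "n = real CARD('n)"
  have n0: "n > 0" unfolding n_def by simp
  have ell0: "\<forall>k. ell k \<noteq> 0" using ell by (metis less_irrefl)
  obtain w where wd: "\<And>s. (w has_real_derivative (m * (Nf s * (t s - \<tau>s)))) (at s)"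
     and pw: "periodic_S1 w" and sw: "smooth_S1 w"
    using exists_w[OF st pt sN pN Npos ts, of m] by blast
  have wdiff: "\<forall>s. w differentiable (at s)" using wd by (auto simp: real_differentiable_def)
  have dw: "deriv w s = m * (Nf s * (t s - \<tau>s))" for s using wd by (rule DERIV_imp_deriv)
  define W where "W = Wv j0 w"
  have E1: "1 / (2 * Nf (x $ j0)) * ckill (gl ell) W x i j = m * (t (x $ j0) - \<tau>s) * sigflat ell j0 x i j" for x i j
    unfolding W_def ckill_Wv[OF wdiff] dw using Npos[rule_format, of "x $ j0"] by (simp add: field_simps)
  have Bfun: "(\<lambda>y i j. \<mu> * sigflat ell j0 y i j + 1 / (2 * Nf (y $ j0)) * ckill (gl ell) W y i j)
      = (\<lambda>y i j. (m * t (y $ j0)) * sigflat ell j0 y i j)"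
    unfolding E1 mu m_def q_def by (auto simp: algebra_simps)
  have Bfun2: "(\<lambda>y i k. 1 / (2 * Nf (y $ j0)) * ckill (gl ell) W y i k)
      = (\<lambda>y i k. m * (t (y $ j0) - \<tau>s) * sigflat ell j0 y i k)"
    unfolding E1 by simp
  have pw1: "m\<^sup>2 * c powr (- q - 1) = c powr (q - 1)"
  proof -
    have "m\<^sup>2 * c powr (- q - 1) = c powr q * c powr q * c powr (- q - 1)"
      unfolding m_def by (simp add: power2_eq_square)
    also have "\<dots> = c powr (q + q + (- q - 1))" by (simp only: powr_add[symmetric])
    finally show ?thesis by simp
  qed
  have ham: "- 2 * kap CARD('n) * qn CARD('n) * lap (gl ell) (\<lambda>x. c) x + scal (gl ell) x * c
         - normsq (gl ell) (\<lambda>y i j. \<mu> * sigflat ell j0 y i j + 1 / (2 * Nf (y $ j0)) * ckill (gl ell) W y i j) x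
             * c powr (- qn CARD('n) - 1)
         + kap CARD('n) * (t (x $ j0))\<^sup>2 * c powr (qn CARD('n) - 1) = 0" for x
  proof -
    have "normsq (gl ell) (\<lambda>y i j. \<mu> * sigflat ell j0 y i j + 1 / (2 * Nf (y $ j0)) * ckill (gl ell) W y i j) x
        = m\<^sup>2 * (t (x $ j0))\<^sup>2 * kap CARD('n)"
      unfolding Bfun normsq_sigflat[OF ell0] by (simp add: power_mult_distrib)
    then show ?thesis using pw1 unfolding q_def[symmetric] by (simp add: algebra_simps)
  qed
  have mom: "divT (gl ell) (\<lambda>y i k. 1 / (2 * Nf (y $ j0)) * ckill (gl ell) W y i k) x j
         = kap CARD('n) * c powr qn CARD('n) * pd j (\<lambda>x. t (x $ j0)) x" for x j
  proof -
    have "\<And>i. pd i (\<lambda>y. m * (t (y $ j0) - \<tau>s) * sigflat ell j0 y i j) x / (ell i)\<^sup>2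
       = (if i = j0 then (if j = j0 then m * deriv t (x $ j0) * kap CARD('n) else 0) else 0)"
    proof -
      fix i
      have "pd i (\<lambda>y. m * (t (y $ j0) - \<tau>s) * sigflat ell j0 y i j) x
          = pd i (\<lambda>y. m * (t (y $ j0) - \<tau>s) * sigflat ell j0 0 i j) x"
        by (simp add: sigflat_def)
      then show "pd i (\<lambda>y. m * (t (y $ j0) - \<tau>s) * sigflat ell j0 y i j) x / (ell i)\<^sup>2
       = (if i = j0 then (if j = j0 then m * deriv t (x $ j0) * kap CARD('n) else 0) else 0)"
        unfolding pd_tC[OF st] using ell0 by (auto simp: sigflat_def)
    qed
    then have "divT (gl ell) (\<lambda>y i k. 1 / (2 * Nf (y $ j0)) * ckill (gl ell) W y i k) x j
        = (if j = j0 then m * deriv t (x $ j0) * kap CARD('n) else 0)"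
      unfolding Bfun2 divT_gl[OF ell0] by simp
    moreover have "pd j (\<lambda>y. t (y $ j0)) x = (if j = j0 then deriv t (x $ j0) else 0)"
      using smooth_diff[OF st] by (subst pd_comp) auto
    ultimately show ?thesis unfolding m_def q_def by simp
  qed
  have sc: "smooth_S1 (\<lambda>_. a)" for a by (rule Alg_smooth) (rule Alg.const)
  have Wcomp: "smooth_Tn (\<lambda>x. W x $ k) \<and> periodic_Tn (\<lambda>x. W x $ k)" for k
  proof -
    have "smooth_S1 (if k = j0 then w else (\<lambda>_. 0))" "periodic_S1 (if k = j0 then w else (\<lambda>_. 0))"
      using sw pw sc by (auto simp: periodic_S1_def)
    then show ?thesis unfolding W_def Wv_comp
      by (auto intro: smooth_Tn_comp periodic_Tn_comp)
  qed
  have "smooth_Tn (\<lambda>x::real^'n. (\<lambda>_. c) (x $ j0))" by (rule smooth_Tn_comp[OF sc])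
  then have phi: "smooth_Tn (\<lambda>x::real^'n. c)" by simp
  have phip: "periodic_Tn (\<lambda>x::real^'n. c)" unfolding periodic_Tn_def by simp
  have sol: "ctsh_solution (gl ell) (\<lambda>x i j. \<mu> * sigflat ell j0 x i j) (\<lambda>x. t (x $ j0)) (\<lambda>x. Nf (x $ j0)) (\<lambda>x. c) W"
    unfolding ctsh_solution_def ctsh_eqs_def using c Wcomp phi phip ham mom by simp
  have rr: "r\<^sup>2 = c powr (q - 2)" using r2[OF c r] unfolding q_def .
  have gg: "gen_g (gl ell) (\<lambda>x. c) = gl (\<lambda>k. r * ell k)"
    unfolding gen_g_def gl_def q_def[symmetric] rr[symmetric] by (auto intro!: ext simp: power_mult_distrib)
  have cm: "c powr (-2) * m = c powr (q - 2)"
    unfolding m_def by (simp add: powr_add[symmetric])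
  have gk: "gen_K (gl ell) (\<lambda>x i j. \<mu> * sigflat ell j0 x i j) (\<lambda>x. t (x $ j0)) (\<lambda>x. Nf (x $ j0)) (\<lambda>x. c) W
               = (\<lambda>x i j. if i = j0 \<and> j = j0 then t (x $ j0) * (r * ell j0)\<^sup>2 else 0)"
  proof (intro ext)
    fix x i j
    have "gen_K (gl ell) (\<lambda>x i j. \<mu> * sigflat ell j0 x i j) (\<lambda>x. t (x $ j0)) (\<lambda>x. Nf (x $ j0)) (\<lambda>x. c) W x i j
      = c powr (-2) * ((m * t (x $ j0)) * sigflat ell j0 x i j) + t (x $ j0) / n * (c powr (q - 2) * gl ell x i j)"
      unfolding gen_K_def gen_g_def using fun_cong[OF fun_cong[OF fun_cong[OF Bfun, of x], of i], of j]
      unfolding n_def q_def by simp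
    also have "\<dots> = r\<^sup>2 * t (x $ j0) * (sigflat ell j0 x i j + gl ell x i j / n)"
      using cm rr by (simp add: algebra_simps)
    also have "\<dots> = (if i = j0 \<and> j = j0 then t (x $ j0) * (r * ell j0)\<^sup>2 else 0)"
      using n0 unfolding sigflat_def gl_def kap_def n_def[symmetric]
      by (auto simp: field_simps power_mult_distrib)
    finally show "gen_K (gl ell) (\<lambda>x i j. \<mu> * sigflat ell j0 x i j) (\<lambda>x. t (x $ j0)) (\<lambda>x. Nf (x $ j0)) (\<lambda>x. c) W x i j
      = (if i = j0 \<and> j = j0 then t (x $ j0) * (r * ell j0)\<^sup>2 else 0)" .
  qed
  have rpos: "r > 0" using r c by simp
  have cons: "constraints (gl (\<lambda>k. r * ell k)) (\<lambda>x i j. if i = j0 \<and> j = j0 then t (x $ j0) * (r * ell j0)\<^sup>2 else 0)"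
    using constraints_K[of "\<lambda>k. r * ell k" t j0] rpos ell0 st by simp
  have Wk: "\<forall>x k. k \<noteq> j0 \<longrightarrow> W x $ k = 0" unfolding W_def Wv_def by simp
  show ?thesis
    using sol Wk E1 gg gk cons unfolding m_def q_def by (intro exI[of _ W]) simp
qed


theorem proposition6p1:
  fixes ell :: "'n::finite \<Rightarrow> real" and j0 :: 'n and \<mu> :: real
    and t Nf :: "real \<Rightarrow> real"
  assumes "CARD('n) \<ge> 3"
    and "\<forall>k. ell k > 0"
    and "smooth_S1 t" and "periodic_S1 t"
    and "smooth_S1 Nf" and "periodic_S1 Nf" and "\<forall>s. Nf s > 0"
  defines "\<tau> \<equiv> (\<lambda>x::real^'n. t (x $ j0))"
    and "N \<equiv> (\<lambda>x::real^'n. Nf (x $ j0))"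
    and "\<tau>s \<equiv> integral {0..1} (\<lambda>s. Nf s * t s) / integral {0..1} Nf"
  defines "\<xi> \<equiv> (\<lambda>x::real^'n. \<tau> x - \<tau>s)"
    and "\<sigma> \<equiv> (\<lambda>x::real^'n. \<lambda>i j. \<mu> * sigflat ell j0 x i j)"
  shows
   "(\<mu> \<noteq> 0 \<and> \<tau>s \<noteq> 0 \<and> sgn \<mu> = sgn \<tau>s \<longrightarrow>
      (\<forall>c r. c = (\<mu> / \<tau>s) powr (1 / qn CARD('n)) \<longrightarrow> r = c powr ((qn CARD('n) - 2) / 2) \<longrightarrow>
        (\<exists>W. ctsh_solution (gl ell) \<sigma> \<tau> N (\<lambda>x. c) W
           \<and> (\<forall>x k. k \<noteq> j0 \<longrightarrow> W x $ k = 0)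
           \<and> (\<forall>x i j. 1 / (2 * N x) * ckill (gl ell) W x i j = c powr qn CARD('n) * \<xi> x * sigflat ell j0 x i j)
           \<and> gen_g (gl ell) (\<lambda>x. c) = gl (\<lambda>k. r * ell k)
           \<and> gen_K (gl ell) \<sigma> \<tau> N (\<lambda>x. c) W
               = (\<lambda>x i j. if i = j0 \<and> j = j0 then \<tau> x * (r * ell j0)\<^sup>2 else 0)
           \<and> constraints (gen_g (gl ell) (\<lambda>x. c)) (gen_K (gl ell) \<sigma> \<tau> N (\<lambda>x. c) W)
           \<and> r = (\<mu> / \<tau>s) powr (1 / real CARD('n)))))
    \<and> (\<mu> = 0 \<and> \<tau>s = 0 \<longrightarrow>
      (\<forall>c r. c > 0 \<longrightarrow> r = c powr ((qn CARD('n) - 2) / 2) \<longrightarrow>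
        (\<exists>W. ctsh_solution (gl ell) \<sigma> \<tau> N (\<lambda>x. c) W
           \<and> (\<forall>x i j. 1 / (2 * N x) * ckill (gl ell) W x i j = c powr qn CARD('n) * \<xi> x * sigflat ell j0 x i j)
           \<and> gen_g (gl ell) (\<lambda>x. c) = gl (\<lambda>k. r * ell k)
           \<and> gen_K (gl ell) \<sigma> \<tau> N (\<lambda>x. c) W
               = (\<lambda>x i j. if i = j0 \<and> j = j0 then \<tau> x * (r * ell j0)\<^sup>2 else 0)
           \<and> constraints (gen_g (gl ell) (\<lambda>x. c)) (gen_K (gl ell) \<sigma> \<tau> N (\<lambda>x. c) W))))"
  proof -
  have ts: "\<tau>s = integral {0..1} (\<lambda>s. Nf s * t s) / integral {0..1} Nf" unfolding \<tau>s_def ..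
  have n3: "real CARD('n) \<ge> 3" using assms(1) by simp
  have qpos: "qn CARD('n) > 2" unfolding qn_def using n3 by (simp add: field_simps)
  show ?thesis
    unfolding \<xi>_def \<sigma>_def \<tau>_def N_def
  proof (intro conjI impI allI)
    fix c r :: real
    assume h: "\<mu> \<noteq> 0 \<and> \<tau>s \<noteq> 0 \<and> sgn \<mu> = sgn \<tau>s"
      and hc: "c = (\<mu> / \<tau>s) powr (1 / qn CARD('n))"
      and hr: "r = c powr ((qn CARD('n) - 2) / 2)"
    have pos: "\<mu> / \<tau>s > 0" using h
      by (cases "\<mu> > 0"; cases "\<tau>s > 0") (auto simp: sgn_if divide_pos_pos divide_neg_neg split: if_splits)
    have c: "c > 0" using hc pos h by simp
    have "c powr qn CARD('n) = (\<mu> / \<tau>s) powr (1 / qn CARD('n) * qn CARD('n))"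
      unfolding hc by (simp add: powr_powr)
    also have "\<dots> = \<mu> / \<tau>s" using qpos pos by (simp add: abs_of_pos flip: abs_divide)
    finally have mu: "\<mu> = c powr qn CARD('n) * \<tau>s" using h by simp
    have "r = (\<mu> / \<tau>s) powr (1 / qn CARD('n) * ((qn CARD('n) - 2) / 2))"
      unfolding hr hc by (simp add: powr_powr)
    also have "1 / qn CARD('n) * ((qn CARD('n) - 2) / 2) = 1 / real CARD('n)"
      unfolding qn_def using n3 by (simp add: field_simps)
    finally have rr: "r = (\<mu> / \<tau>s) powr (1 / real CARD('n))" .
    show "\<exists>W. ctsh_solution (gl ell) (\<lambda>x i j. \<mu> * sigflat ell j0 x i j) (\<lambda>x. t (x $ j0)) (\<lambda>x. Nf (x $ j0)) (\<lambda>x. c) W \<and>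
              (\<forall>x k. k \<noteq> j0 \<longrightarrow> W x $ k = 0) \<and>
              (\<forall>x i j. 1 / (2 * Nf (x $ j0)) * ckill (gl ell) W x i j = c powr qn CARD('n) * (t (x $ j0) - \<tau>s) * sigflat ell j0 x i j) \<and>
              gen_g (gl ell) (\<lambda>x. c) = gl (\<lambda>k. r * ell k) \<and>
              gen_K (gl ell) (\<lambda>x i j. \<mu> * sigflat ell j0 x i j) (\<lambda>x. t (x $ j0)) (\<lambda>x. Nf (x $ j0)) (\<lambda>x. c) W =
              (\<lambda>x i j. if i = j0 \<and> j = j0 then t (x $ j0) * (r * ell j0)\<^sup>2 else 0) \<and>
              constraints (gen_g (gl ell) (\<lambda>x. c)) (gen_K (gl ell) (\<lambda>x i j. \<mu> * sigflat ell j0 x i j) (\<lambda>x. t (x $ j0)) (\<lambda>x. Nf (x $ j0)) (\<lambda>x. c) W) \<and>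
              r = (\<mu> / \<tau>s) powr (1 / real CARD('n))"
      using core[OF assms(1-7) ts c mu hr] rr by blast
  next
    fix c r :: real
    assume h: "\<mu> = 0 \<and> \<tau>s = 0" and c: "c > 0"
      and hr: "r = c powr ((qn CARD('n) - 2) / 2)"
    have mu: "\<mu> = c powr qn CARD('n) * \<tau>s" using h by simp
    show "\<exists>W. ctsh_solution (gl ell) (\<lambda>x i j. \<mu> * sigflat ell j0 x i j) (\<lambda>x. t (x $ j0)) (\<lambda>x. Nf (x $ j0)) (\<lambda>x. c) W \<and>
              (\<forall>x i j. 1 / (2 * Nf (x $ j0)) * ckill (gl ell) W x i j = c powr qn CARD('n) * (t (x $ j0) - \<tau>s) * sigflat ell j0 x i j) \<and>
              gen_g (gl ell) (\<lambda>x. c) = gl (\<lambda>k. r * ell k) \<and>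
              gen_K (gl ell) (\<lambda>x i j. \<mu> * sigflat ell j0 x i j) (\<lambda>x. t (x $ j0)) (\<lambda>x. Nf (x $ j0)) (\<lambda>x. c) W =
              (\<lambda>x i j. if i = j0 \<and> j = j0 then t (x $ j0) * (r * ell j0)\<^sup>2 else 0) \<and>
              constraints (gen_g (gl ell) (\<lambda>x. c)) (gen_K (gl ell) (\<lambda>x i j. \<mu> * sigflat ell j0 x i j) (\<lambda>x. t (x $ j0)) (\<lambda>x. Nf (x $ j0)) (\<lambda>x. c) W)"
      using core[OF assms(1-7) ts c mu hr] by blast
  qed
qed

end
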